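(* Let $X$ be a real random variable with finite fourth moment and $\mathbb{E}(X)=0$; write $\mu_2=\mathbb{E}(X^2)$ and $\mu_4=\mathbb{E}(X^4)$. Let $L=(X_1,\dots,X_n)$ be an i.i.d. sample of $X$ with $n\ge 2$. For a sample $(Y_1,\dots,Y_k)$ with $k\ge 2$ let $\hat v(Y_1,\dots,Y_k)=\frac1{k-1}\sum_{i=1}^k\big(Y_i-\frac1k\sum_{j=1}^kY_j\big)^2$ be the unbiased sample variance. Fix a batch size $m\ge 2$ and $N\ge1$. Let $\mathcal U$ be the set of all functions $u:\{1,\dots,m\}\to\{1,\dots,n\}$, $L_u=(X_{u(1)},\dots,X_{u(m)})$, let $B=(U^1,\dots,U^N)$ be i.i.d. uniform on $\mathcal U$ and independent of $L$, and let $\tilde v(L,B)=\frac1N\sum_{i=1}^N\hat v(L_{U^i})$. Let $U$ be uniform on $\mathcal U$ independent of $L$, with $\mathbb{E}_U,\mathrm{Var}_U$ the conditional expectation/variance over $U$ given $L$. Then: (1) $\mathbb{E}_{(L,B)}(\tilde v(L,B))=\frac{n-1}{n}\mu_2$; (2) $\mathrm{Var}_{(L,B)}(\tilde v(L,B))=\frac1N\mathbb{E}_L\big(\mathrm{Var}_U(\hat v(L_U))\big)+\mathrm{Var}_L\big(\mathbb{E}_U(\hat v(L_U))\big)$, where $$\mathbb{E}_L\big(\mathrm{Var}_U(\hat v(L_U))\big)=\frac{n-1}{nm(m-1)}\Big(3m-3+\frac{n^2-2n+3}{n^2}(6-4m)\Big)\mu_2^2+\frac{n-1}{nm(m-1)}\Big(m-1+\frac{n-1}{n^2}(6-4m)\Big)\mu_4$$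 and $$\mathrm{Var}_L\big(\mathbb{E}_U(\hat v(L_U))\big)=\frac{(3-n)(n-1)}{n^3}\mu_2^2+\frac{(n-1)^2}{n^3}\mu_4.$$ Moreover $\mathrm{MSE}(\tilde v(L,B)):=\mathbb{E}_{(L,B)}\big((\tilde v(L,B)-\mu_2)^2\big)=\mathrm{Var}_{(L,B)}(\tilde v(L,B))+\frac1{n^2}\mu_2^2$.
   Context: $\mathbb{E}_L,\mathrm{Var}_L$ are taken with respect to the sample $L$; $\mathbb{E}_{(L,B)},\mathrm{Var}_{(L,B)}$ with respect to the pair $(L,B)$. $\tilde v$ is the bagged unbiased sample variance estimator with batch size $m$ and $N$ bagging iterations. *)

theory Defs
  imports "HOL-Probability.Probability"
begin

definition vhat :: "nat \<Rightarrow> (nat \<Rightarrow> real) \<Rightarrow> real" where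
  "vhat k Y = (1 / (real k - 1)) *
     (\<Sum>i=1..k. (Y i - (1 / real k) * (\<Sum>j=1..k. Y j))\<^sup>2)"

definition Ufuns :: "nat \<Rightarrow> nat \<Rightarrow> (nat \<Rightarrow> nat) set" where
  "Ufuns m n = PiE {1..m} (\<lambda>_. {1..n})"

definition Unif :: "nat \<Rightarrow> nat \<Rightarrow> (nat \<Rightarrow> nat) measure" where
  "Unif m n = measure_pmf (pmf_of_set (Ufuns m n))"

definition sample_meas :: "real measure \<Rightarrow> nat \<Rightarrow> (nat \<Rightarrow> real) measure" where
  "sample_meas D n = PiM {1..n} (\<lambda>_. D)"

definition bag_meas :: "nat \<Rightarrow> nat \<Rightarrow> nat \<Rightarrow> (nat \<Rightarrow> nat \<Rightarrow> nat) measure" where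
  "bag_meas m n N = PiM {1..N} (\<lambda>_. Unif m n)"

definition joint_meas :: "real measure \<Rightarrow> nat \<Rightarrow> nat \<Rightarrow> nat \<Rightarrow> ((nat \<Rightarrow> real) \<times> (nat \<Rightarrow> nat \<Rightarrow> nat)) measure" where
  "joint_meas D n m N = sample_meas D n \<Otimes>\<^sub>M bag_meas m n N"

definition subsample :: "(nat \<Rightarrow> real) \<Rightarrow> (nat \<Rightarrow> nat) \<Rightarrow> (nat \<Rightarrow> real)" where
  "subsample L u = (\<lambda>i. L (u i))"

definition vtilde :: "nat \<Rightarrow> nat \<Rightarrow> (nat \<Rightarrow> real) \<Rightarrow> (nat \<Rightarrow> nat \<Rightarrow> nat) \<Rightarrow> real" where
  "vtilde m N L B = (1 / real N) * (\<Sum>i=1..N. vhat m (subsample L (B i)))"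

text \<open>Conditional expectation / variance over U (uniform, independent of L) given L.\<close>
definition EU :: "nat \<Rightarrow> nat \<Rightarrow> (nat \<Rightarrow> real) \<Rightarrow> real" where
  "EU m n L = prob_space.expectation (Unif m n) (\<lambda>u. vhat m (subsample L u))"

definition VarU :: "nat \<Rightarrow> nat \<Rightarrow> (nat \<Rightarrow> real) \<Rightarrow> real" where
  "VarU m n L = prob_space.variance (Unif m n) (\<lambda>u. vhat m (subsample L u))"

end

theory Submission
  imports Defs
begin


lemma abs_pow_le: fixes x :: real assumes "p \<le> 4" shows "\<bar>x ^ p\<bar> \<le> 1 + x ^ 4"
proof (cases "\<bar>x\<bar> \<le> 1")
  case True
  then have "\<bar>x\<bar> ^ p \<le> 1" by (simp add: power_le_one)
  then have "\<bar>x ^ p\<bar> \<le> 1" by (simp add: power_abs)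
  moreover have "0 \<le> x ^ 4" by (simp add: zero_le_even_power)
  ultimately show ?thesis by linarith
next
  case False
  then have "\<bar>x\<bar> ^ p \<le> \<bar>x\<bar> ^ 4" using assms by (intro power_increasing) auto
  also have "\<dots> = x ^ 4" by (simp add: power_abs[symmetric] zero_le_even_power)
  finally show ?thesis by (simp add: power_abs)
qed

lemma int_pow_le4:
  fixes X :: "'a \<Rightarrow> real"
  assumes "prob_space M" "X \<in> borel_measurable M" "integrable M (\<lambda>x. X x ^ 4)" "p \<le> 4"
  shows "integrable M (\<lambda>x. X x ^ p)"
proof (rule Bochner_Integration.integrable_bound[where f="\<lambda>x. 1 + X x ^ 4"])
  interpret prob_space M by fact
  show "integrable M (\<lambda>x. 1 + X x ^ 4)" using assms(3) by simp
  show "(\<lambda>x. X x ^ p) \<in> borel_measurable M" using assms(2) by measurable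
  show "AE x in M. norm (X x ^ p) \<le> norm (1 + X x ^ 4)"
    using abs_pow_le[OF assms(4)] by (intro AE_I2) (auto intro: order_trans)
qed

definition ps :: "nat \<Rightarrow> 'i set \<Rightarrow> ('i \<Rightarrow> real) \<Rightarrow> real" where
  "ps p J x = (\<Sum>i\<in>J. x i ^ p)"

lemma ps_restrict[simp]: "ps p J (restrict x J) = ps p J x"
  unfolding ps_def by (intro sum.cong) auto

lemma ps_insert: "finite J \<Longrightarrow> a \<notin> J \<Longrightarrow> ps p (insert a J) x = x a ^ p + ps p J x"
  unfolding ps_def by simp

lemma ps_empty[simp]: "ps p {} x = 0" unfolding ps_def by simp

lemma ps_meas[measurable]: "ps p J \<in> borel_measurable (PiM J (\<lambda>_. borel))"
  unfolding ps_def by measurable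

context prob_space
begin

lemma indep_pow_mult:
  fixes X :: "'i \<Rightarrow> 'a \<Rightarrow> real"
  assumes fin: "finite J" "a \<notin> J" and ind: "indep_vars (\<lambda>_. borel) X (insert a J)"
    and int4: "integrable M (\<lambda>\<omega>. X a \<omega> ^ 4)" and e: "e \<le> 4"
    and g: "g \<in> borel_measurable (PiM J (\<lambda>_. borel))"
    and gr: "\<And>x. g (restrict x J) = g x"
    and ig: "integrable M (\<lambda>\<omega>. g (\<lambda>i. X i \<omega>))"
  shows "integrable M (\<lambda>\<omega>. X a \<omega> ^ e * g (\<lambda>i. X i \<omega>))"
    "(\<integral>\<omega>. X a \<omega> ^ e * g (\<lambda>i. X i \<omega>) \<partial>M) = (\<integral>\<omega>. X a \<omega> ^ e \<partial>M) * (\<integral>\<omega>. g (\<lambda>i. X i \<omega>) \<partial>M)"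
proof -
  have iv: "indep_var (PiM {a} (\<lambda>_. borel)) (\<lambda>\<omega>. restrict (\<lambda>i. X i \<omega>) {a})
       (PiM J (\<lambda>_. borel)) (\<lambda>\<omega>. restrict (\<lambda>i. X i \<omega>) J)"
    using fin by (intro indep_var_restrict[OF ind]) auto
  have iv2: "indep_var borel ((\<lambda>x. x a ^ e) \<circ> (\<lambda>\<omega>. restrict (\<lambda>i. X i \<omega>) {a}))
       borel (g \<circ> (\<lambda>\<omega>. restrict (\<lambda>i. X i \<omega>) J))"
  proof (rule indep_var_compose[OF iv])
    show "(\<lambda>x. x a ^ e) \<in> borel_measurable (PiM {a} (\<lambda>_. (borel :: real measure)))" by measurable
  qed (rule g)
  have eq1: "((\<lambda>x. x a ^ e) \<circ> (\<lambda>\<omega>. restrict (\<lambda>i. X i \<omega>) {a})) = (\<lambda>\<omega>. X a \<omega> ^ e)"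
    by auto
  have eq2: "(g \<circ> (\<lambda>\<omega>. restrict (\<lambda>i. X i \<omega>) J)) = (\<lambda>\<omega>. g (\<lambda>i. X i \<omega>))"
    using gr by auto
  have iv3: "indep_var borel (\<lambda>\<omega>. X a \<omega> ^ e) borel (\<lambda>\<omega>. g (\<lambda>i. X i \<omega>))"
    using iv2 unfolding eq1 eq2 .
  have rv: "random_variable borel (X a)" using ind by (auto simp: indep_vars_def)
  have ie: "integrable M (\<lambda>\<omega>. X a \<omega> ^ e)"
    by (rule int_pow_le4[OF prob_space_axioms rv int4 e])
  show "integrable M (\<lambda>\<omega>. X a \<omega> ^ e * g (\<lambda>i. X i \<omega>))"
    by (rule indep_var_integrable[OF iv3 ie ig])
  show "(\<integral>\<omega>. X a \<omega> ^ e * g (\<lambda>i. X i \<omega>) \<partial>M) = (\<integral>\<omega>. X a \<omega> ^ e \<partial>M) * (\<integral>\<omega>. g (\<lambda>i. X i \<omega>) \<partial>M)"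
    by (rule indep_var_lebesgue_integral[OF iv3 ie ig])
qed


lemma moments_induct:
  fixes X :: "'i \<Rightarrow> 'a \<Rightarrow> real"
  assumes fin: "finite I" and ind: "indep_vars (\<lambda>_. borel) X I"
    and i4: "\<And>i. i \<in> I \<Longrightarrow> integrable M (\<lambda>\<omega>. X i \<omega> ^ 4)"
    and m1: "\<And>i. i \<in> I \<Longrightarrow> (\<integral>\<omega>. X i \<omega> \<partial>M) = 0"
    and m2: "\<And>i. i \<in> I \<Longrightarrow> (\<integral>\<omega>. X i \<omega> ^ 2 \<partial>M) = s2"
    and m4: "\<And>i. i \<in> I \<Longrightarrow> (\<integral>\<omega>. X i \<omega> ^ 4 \<partial>M) = s4"
    and JI: "J \<subseteq> I"
  shows "integrable M (\<lambda>\<omega>. ps 1 J (\<lambda>i. X i \<omega>)) \<and> (\<integral>\<omega>. ps 1 J (\<lambda>i. X i \<omega>) \<partial>M) = 0 \<and>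
    integrable M (\<lambda>\<omega>. ps 1 J (\<lambda>i. X i \<omega>) ^ 2) \<and>
    (\<integral>\<omega>. ps 1 J (\<lambda>i. X i \<omega>) ^ 2 \<partial>M) = real (card J) * s2 \<and>
    integrable M (\<lambda>\<omega>. ps 1 J (\<lambda>i. X i \<omega>) ^ 3) \<and>
    integrable M (\<lambda>\<omega>. ps 1 J (\<lambda>i. X i \<omega>) ^ 4) \<and>
    (\<integral>\<omega>. ps 1 J (\<lambda>i. X i \<omega>) ^ 4 \<partial>M) = real (card J) * s4 + 3 * real (card J) * (real (card J) - 1) * s2 ^ 2 \<and>
    integrable M (\<lambda>\<omega>. ps 2 J (\<lambda>i. X i \<omega>)) \<and>
    (\<integral>\<omega>. ps 2 J (\<lambda>i. X i \<omega>) \<partial>M) = real (card J) * s2 \<and>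
    integrable M (\<lambda>\<omega>. ps 2 J (\<lambda>i. X i \<omega>) * ps 1 J (\<lambda>i. X i \<omega>)) \<and>
    integrable M (\<lambda>\<omega>. ps 2 J (\<lambda>i. X i \<omega>) * ps 1 J (\<lambda>i. X i \<omega>) ^ 2) \<and>
    (\<integral>\<omega>. ps 2 J (\<lambda>i. X i \<omega>) * ps 1 J (\<lambda>i. X i \<omega>) ^ 2 \<partial>M) = real (card J) * s4 + real (card J) * (real (card J) - 1) * s2 ^ 2 \<and>
    integrable M (\<lambda>\<omega>. ps 2 J (\<lambda>i. X i \<omega>) ^ 2) \<and>
    (\<integral>\<omega>. ps 2 J (\<lambda>i. X i \<omega>) ^ 2 \<partial>M) = real (card J) * s4 + real (card J) * (real (card J) - 1) * s2 ^ 2 \<and>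
    integrable M (\<lambda>\<omega>. ps 3 J (\<lambda>i. X i \<omega>)) \<and>
    integrable M (\<lambda>\<omega>. ps 3 J (\<lambda>i. X i \<omega>) * ps 1 J (\<lambda>i. X i \<omega>)) \<and>
    (\<integral>\<omega>. ps 3 J (\<lambda>i. X i \<omega>) * ps 1 J (\<lambda>i. X i \<omega>) \<partial>M) = real (card J) * s4 \<and>
    integrable M (\<lambda>\<omega>. ps 4 J (\<lambda>i. X i \<omega>)) \<and>
    (\<integral>\<omega>. ps 4 J (\<lambda>i. X i \<omega>) \<partial>M) = real (card J) * s4"
proof -
  have finJ: "finite J" using JI fin by (rule finite_subset)
  show ?thesis using finJ JI
  proof (induction J rule: finite_subset_induct')
    case empty
    show ?case by simp
  next
    case (insert a J)
    let ?T = "\<lambda>\<omega>. ps 1 J (\<lambda>i. X i \<omega>)"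
    let ?Q = "\<lambda>\<omega>. ps 2 J (\<lambda>i. X i \<omega>)"
    let ?C = "\<lambda>\<omega>. ps 3 J (\<lambda>i. X i \<omega>)"
    let ?F = "\<lambda>\<omega>. ps 4 J (\<lambda>i. X i \<omega>)"
    define k where "k = real (card J)"
    have ck: "real (card (insert a J)) = k + 1" using insert.hyps by (simp add: k_def)
    from insert.IH have
      iT: "integrable M ?T" and eT: "(\<integral>\<omega>. ?T \<omega> \<partial>M) = 0" and
      iT2: "integrable M (\<lambda>\<omega>. ?T \<omega> ^ 2)" and eT2: "(\<integral>\<omega>. ?T \<omega> ^ 2 \<partial>M) = k * s2" and
      iT3: "integrable M (\<lambda>\<omega>. ?T \<omega> ^ 3)" and
      iT4: "integrable M (\<lambda>\<omega>. ?T \<omega> ^ 4)" and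
      eT4: "(\<integral>\<omega>. ?T \<omega> ^ 4 \<partial>M) = k * s4 + 3 * k * (k - 1) * s2 ^ 2" and
      iQ: "integrable M ?Q" and eQ: "(\<integral>\<omega>. ?Q \<omega> \<partial>M) = k * s2" and
      iQT: "integrable M (\<lambda>\<omega>. ?Q \<omega> * ?T \<omega>)" and
      iQT2: "integrable M (\<lambda>\<omega>. ?Q \<omega> * ?T \<omega> ^ 2)" and
      eQT2: "(\<integral>\<omega>. ?Q \<omega> * ?T \<omega> ^ 2 \<partial>M) = k * s4 + k * (k - 1) * s2 ^ 2" and
      iQ2: "integrable M (\<lambda>\<omega>. ?Q \<omega> ^ 2)" and
      eQ2: "(\<integral>\<omega>. ?Q \<omega> ^ 2 \<partial>M) = k * s4 + k * (k - 1) * s2 ^ 2" and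
      iC: "integrable M ?C" and
      iCT: "integrable M (\<lambda>\<omega>. ?C \<omega> * ?T \<omega>)" and
      eCT: "(\<integral>\<omega>. ?C \<omega> * ?T \<omega> \<partial>M) = k * s4" and
      iF: "integrable M ?F" and eF: "(\<integral>\<omega>. ?F \<omega> \<partial>M) = k * s4"
      by (simp_all add: k_def)
    have indJ: "indep_vars (\<lambda>_. borel) X (insert a J)"
      using insert.hyps by (intro indep_vars_subset[OF ind]) auto
    have rvY: "random_variable borel (X a)" using ind insert.hyps by (auto simp: indep_vars_def)
    have iY4: "integrable M (\<lambda>\<omega>. X a \<omega> ^ 4)" using insert.hyps i4 by auto
    have iYe: "integrable M (\<lambda>\<omega>. X a \<omega> ^ e)" if "e \<le> 4" for e
      by (rule int_pow_le4[OF prob_space_axioms rvY iY4 that])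
    have iY1: "integrable M (X a)" using iYe[of 1] by simp
    have iY2: "integrable M (\<lambda>\<omega>. X a \<omega> ^ 2)" "integrable M (\<lambda>\<omega>. X a \<omega> ^ 3)"
      using iYe[of 2] iYe[of 3] by simp_all
    have eY1: "(\<integral>\<omega>. X a \<omega> \<partial>M) = 0" and eY2: "(\<integral>\<omega>. X a \<omega> ^ 2 \<partial>M) = s2"
      and eY4: "(\<integral>\<omega>. X a \<omega> ^ 4 \<partial>M) = s4"
      using insert.hyps m1 m2 m4 by auto
    note HP = indep_pow_mult[OF insert.hyps(1) insert.hyps(4) indJ iY4]
    have "integrable M (\<lambda>\<omega>. X a \<omega> ^ 1 * ?T \<omega>)" "(\<integral>\<omega>. X a \<omega> ^ 1 * ?T \<omega> \<partial>M) = 0"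
      using HP[where e=1 and g="\<lambda>x. ps 1 J x"] iT eT by simp_all
    then have iYT: "integrable M (\<lambda>\<omega>. X a \<omega> * ?T \<omega>)" and eYT: "(\<integral>\<omega>. X a \<omega> * ?T \<omega> \<partial>M) = 0"
      by simp_all
    have "integrable M (\<lambda>\<omega>. X a \<omega> ^ 2 * ?T \<omega>)" "(\<integral>\<omega>. X a \<omega> ^ 2 * ?T \<omega> \<partial>M) = (\<integral>\<omega>. X a \<omega> ^ 2 \<partial>M) * (\<integral>\<omega>. ?T \<omega> \<partial>M)"
      using HP[where e=2 and g="\<lambda>x. ps 1 J x"] iT iT2 iT3 iQ iQT iC by simp_all
    then have iY2T: "integrable M (\<lambda>\<omega>. X a \<omega> ^ 2 * ?T \<omega>)" and eY2T: "(\<integral>\<omega>. X a \<omega> ^ 2 * ?T \<omega> \<partial>M) = 0"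
      using eT eT2 eQ eY1 eY2 by simp_all
    have "integrable M (\<lambda>\<omega>. X a \<omega> ^ 1 * ?T \<omega> ^ 2)" "(\<integral>\<omega>. X a \<omega> ^ 1 * ?T \<omega> ^ 2 \<partial>M) = (\<integral>\<omega>. X a \<omega> ^ 1 \<partial>M) * (\<integral>\<omega>. ?T \<omega> ^ 2 \<partial>M)"
      using HP[where e=1 and g="\<lambda>x. ps 1 J x ^ 2"] iT iT2 iT3 iQ iQT iC by simp_all
    then have iYT2: "integrable M (\<lambda>\<omega>. X a \<omega> * ?T \<omega> ^ 2)" and eYT2: "(\<integral>\<omega>. X a \<omega> * ?T \<omega> ^ 2 \<partial>M) = 0"
      using eT eT2 eQ eY1 eY2 by simp_all
    have "integrable M (\<lambda>\<omega>. X a \<omega> ^ 3 * ?T \<omega>)" "(\<integral>\<omega>. X a \<omega> ^ 3 * ?T \<omega> \<partial>M) = (\<integral>\<omega>. X a \<omega> ^ 3 \<partial>M) * (\<integral>\<omega>. ?T \<omega> \<partial>M)"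
      using HP[where e=3 and g="\<lambda>x. ps 1 J x"] iT iT2 iT3 iQ iQT iC by simp_all
    then have iY3T: "integrable M (\<lambda>\<omega>. X a \<omega> ^ 3 * ?T \<omega>)" and eY3T: "(\<integral>\<omega>. X a \<omega> ^ 3 * ?T \<omega> \<partial>M) = 0"
      using eT eT2 eQ eY1 eY2 by simp_all
    have "integrable M (\<lambda>\<omega>. X a \<omega> ^ 2 * ?T \<omega> ^ 2)" "(\<integral>\<omega>. X a \<omega> ^ 2 * ?T \<omega> ^ 2 \<partial>M) = (\<integral>\<omega>. X a \<omega> ^ 2 \<partial>M) * (\<integral>\<omega>. ?T \<omega> ^ 2 \<partial>M)"
      using HP[where e=2 and g="\<lambda>x. ps 1 J x ^ 2"] iT iT2 iT3 iQ iQT iC by simp_all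
    then have iY2T2: "integrable M (\<lambda>\<omega>. X a \<omega> ^ 2 * ?T \<omega> ^ 2)" and eY2T2: "(\<integral>\<omega>. X a \<omega> ^ 2 * ?T \<omega> ^ 2 \<partial>M) = s2 * (k * s2)"
      using eT eT2 eQ eY1 eY2 by simp_all
    have "integrable M (\<lambda>\<omega>. X a \<omega> ^ 1 * ?T \<omega> ^ 3)" "(\<integral>\<omega>. X a \<omega> ^ 1 * ?T \<omega> ^ 3 \<partial>M) = (\<integral>\<omega>. X a \<omega> ^ 1 \<partial>M) * (\<integral>\<omega>. ?T \<omega> ^ 3 \<partial>M)"
      using HP[where e=1 and g="\<lambda>x. ps 1 J x ^ 3"] iT iT2 iT3 iQ iQT iC by simp_all
    then have iYT3: "integrable M (\<lambda>\<omega>. X a \<omega> * ?T \<omega> ^ 3)" and eYT3: "(\<integral>\<omega>. X a \<omega> * ?T \<omega> ^ 3 \<partial>M) = 0"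
      using eT eT2 eQ eY1 eY2 by simp_all
    have "integrable M (\<lambda>\<omega>. X a \<omega> ^ 1 * ?Q \<omega>)" "(\<integral>\<omega>. X a \<omega> ^ 1 * ?Q \<omega> \<partial>M) = (\<integral>\<omega>. X a \<omega> ^ 1 \<partial>M) * (\<integral>\<omega>. ?Q \<omega> \<partial>M)"
      using HP[where e=1 and g="\<lambda>x. ps 2 J x"] iT iT2 iT3 iQ iQT iC by simp_all
    then have iYQ: "integrable M (\<lambda>\<omega>. X a \<omega> * ?Q \<omega>)" and eYQ: "(\<integral>\<omega>. X a \<omega> * ?Q \<omega> \<partial>M) = 0"
      using eT eT2 eQ eY1 eY2 by simp_all
    have "integrable M (\<lambda>\<omega>. X a \<omega> ^ 2 * ?Q \<omega>)" "(\<integral>\<omega>. X a \<omega> ^ 2 * ?Q \<omega> \<partial>M) = (\<integral>\<omega>. X a \<omega> ^ 2 \<partial>M) * (\<integral>\<omega>. ?Q \<omega> \<partial>M)"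
      using HP[where e=2 and g="\<lambda>x. ps 2 J x"] iT iT2 iT3 iQ iQT iC by simp_all
    then have iY2Q: "integrable M (\<lambda>\<omega>. X a \<omega> ^ 2 * ?Q \<omega>)" and eY2Q: "(\<integral>\<omega>. X a \<omega> ^ 2 * ?Q \<omega> \<partial>M) = s2 * (k * s2)"
      using eT eT2 eQ eY1 eY2 by simp_all
    have "integrable M (\<lambda>\<omega>. X a \<omega> ^ 1 * (?Q \<omega> * ?T \<omega>))" "(\<integral>\<omega>. X a \<omega> ^ 1 * (?Q \<omega> * ?T \<omega>) \<partial>M) = (\<integral>\<omega>. X a \<omega> ^ 1 \<partial>M) * (\<integral>\<omega>. (?Q \<omega> * ?T \<omega>) \<partial>M)"
      using HP[where e=1 and g="\<lambda>x. ps 2 J x * ps 1 J x"] iT iT2 iT3 iQ iQT iC by simp_all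
    then have iYQT: "integrable M (\<lambda>\<omega>. X a \<omega> * (?Q \<omega> * ?T \<omega>))" and eYQT: "(\<integral>\<omega>. X a \<omega> * (?Q \<omega> * ?T \<omega>) \<partial>M) = 0"
      using eT eT2 eQ eY1 eY2 by simp_all
    have "integrable M (\<lambda>\<omega>. X a \<omega> ^ 1 * ?C \<omega>)" "(\<integral>\<omega>. X a \<omega> ^ 1 * ?C \<omega> \<partial>M) = (\<integral>\<omega>. X a \<omega> ^ 1 \<partial>M) * (\<integral>\<omega>. ?C \<omega> \<partial>M)"
      using HP[where e=1 and g="\<lambda>x. ps 3 J x"] iT iT2 iT3 iQ iQT iC by simp_all
    then have iYC: "integrable M (\<lambda>\<omega>. X a \<omega> * ?C \<omega>)" and eYC: "(\<integral>\<omega>. X a \<omega> * ?C \<omega> \<partial>M) = 0"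
      using eT eT2 eQ eY1 eY2 by simp_all
    have exT1: "\<And>\<omega>. (X a \<omega> + ?T \<omega>) = X a \<omega> + ?T \<omega>" by simp
    have nT1: "integrable M (\<lambda>\<omega>. (X a \<omega> + ?T \<omega>))"
      by (rule Bochner_Integration.integrable_add[OF iY1 iT])
    have vT1: "(\<integral>\<omega>. (X a \<omega> + ?T \<omega>) \<partial>M) = 0 + 0" using iY1 iT eT eY1 eY2 eY4
      by (simp add: Bochner_Integration.integral_add)
    have exT2: "\<And>\<omega>. (X a \<omega> + ?T \<omega>) ^ 2 = X a \<omega> ^ 2 + 2 * (X a \<omega> * ?T \<omega>) + ?T \<omega> ^ 2" by algebra
    have nT2: "integrable M (\<lambda>\<omega>. (X a \<omega> + ?T \<omega>) ^ 2)" unfolding exT2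
      by (rule Bochner_Integration.integrable_add[OF Bochner_Integration.integrable_add[OF iY2(1) integrable_mult_right[OF iYT]] iT2])
    have vT2: "(\<integral>\<omega>. (X a \<omega> + ?T \<omega>) ^ 2 \<partial>M) = s2 + 2 * (0) + k * s2" unfolding exT2 using iY2(1) iYT iT2 eYT eT2 eY1 eY2 eY4
      by (simp add: Bochner_Integration.integral_add)
    have exT3: "\<And>\<omega>. (X a \<omega> + ?T \<omega>) ^ 3 = X a \<omega> ^ 3 + 3 * (X a \<omega> ^ 2 * ?T \<omega>) + 3 * (X a \<omega> * ?T \<omega> ^ 2) + ?T \<omega> ^ 3" by algebra
    have nT3: "integrable M (\<lambda>\<omega>. (X a \<omega> + ?T \<omega>) ^ 3)" unfolding exT3
      by (rule Bochner_Integration.integrable_add[OF Bochner_Integration.integrable_add[OF Bochner_Integration.integrable_add[OF iY2(2) integrable_mult_right[OF iY2T]] integrable_mult_right[OF iYT2]] iT3])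
    have exT4: "\<And>\<omega>. (X a \<omega> + ?T \<omega>) ^ 4 = X a \<omega> ^ 4 + 4 * (X a \<omega> ^ 3 * ?T \<omega>) + 6 * (X a \<omega> ^ 2 * ?T \<omega> ^ 2) + 4 * (X a \<omega> * ?T \<omega> ^ 3) + ?T \<omega> ^ 4" by algebra
    have nT4: "integrable M (\<lambda>\<omega>. (X a \<omega> + ?T \<omega>) ^ 4)" unfolding exT4
      by (rule Bochner_Integration.integrable_add[OF Bochner_Integration.integrable_add[OF Bochner_Integration.integrable_add[OF Bochner_Integration.integrable_add[OF iY4 integrable_mult_right[OF iY3T]] integrable_mult_right[OF iY2T2]] integrable_mult_right[OF iYT3]] iT4])
    have vT4: "(\<integral>\<omega>. (X a \<omega> + ?T \<omega>) ^ 4 \<partial>M) = s4 + 4 * (0) + 6 * (s2 * (k * s2)) + 4 * (0) + k * s4 + 3 * k * (k - 1) * s2 ^ 2" unfolding exT4 using iY4 iY3T iY2T2 iYT3 iT4 eY3T eY2T2 eYT3 eT4 eY1 eY2 eY4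
      by (simp add: Bochner_Integration.integral_add)
    have exQ: "\<And>\<omega>. (X a \<omega> ^ 2 + ?Q \<omega>) = X a \<omega> ^ 2 + ?Q \<omega>" by simp
    have nQ: "integrable M (\<lambda>\<omega>. (X a \<omega> ^ 2 + ?Q \<omega>))"
      by (rule Bochner_Integration.integrable_add[OF iY2(1) iQ])
    have vQ: "(\<integral>\<omega>. (X a \<omega> ^ 2 + ?Q \<omega>) \<partial>M) = s2 + k * s2" using iY2(1) iQ eQ eY1 eY2 eY4
      by (simp add: Bochner_Integration.integral_add)
    have exQT: "\<And>\<omega>. (X a \<omega> ^ 2 + ?Q \<omega>) * (X a \<omega> + ?T \<omega>) = X a \<omega> ^ 3 + (X a \<omega> ^ 2 * ?T \<omega>) + (X a \<omega> * ?Q \<omega>) + (?Q \<omega> * ?T \<omega>)" by algebra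
    have nQT: "integrable M (\<lambda>\<omega>. (X a \<omega> ^ 2 + ?Q \<omega>) * (X a \<omega> + ?T \<omega>))" unfolding exQT
      by (rule Bochner_Integration.integrable_add[OF Bochner_Integration.integrable_add[OF Bochner_Integration.integrable_add[OF iY2(2) iY2T] iYQ] iQT])
    have exQT2: "\<And>\<omega>. (X a \<omega> ^ 2 + ?Q \<omega>) * (X a \<omega> + ?T \<omega>) ^ 2 = X a \<omega> ^ 4 + 2 * (X a \<omega> ^ 3 * ?T \<omega>) + (X a \<omega> ^ 2 * ?T \<omega> ^ 2) + (X a \<omega> ^ 2 * ?Q \<omega>) + 2 * (X a \<omega> * (?Q \<omega> * ?T \<omega>)) + (?Q \<omega> * ?T \<omega> ^ 2)" by algebra
    have nQT2: "integrable M (\<lambda>\<omega>. (X a \<omega> ^ 2 + ?Q \<omega>) * (X a \<omega> + ?T \<omega>) ^ 2)" unfolding exQT2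
      by (rule Bochner_Integration.integrable_add[OF Bochner_Integration.integrable_add[OF Bochner_Integration.integrable_add[OF Bochner_Integration.integrable_add[OF Bochner_Integration.integrable_add[OF iY4 integrable_mult_right[OF iY3T]] iY2T2] iY2Q] integrable_mult_right[OF iYQT]] iQT2])
    have vQT2: "(\<integral>\<omega>. (X a \<omega> ^ 2 + ?Q \<omega>) * (X a \<omega> + ?T \<omega>) ^ 2 \<partial>M) = s4 + 2 * (0) + s2 * (k * s2) + s2 * (k * s2) + 2 * (0) + k * s4 + k * (k - 1) * s2 ^ 2" unfolding exQT2 using iY4 iY3T iY2T2 iY2Q iYQT iQT2 eY3T eY2T2 eY2Q eYQT eQT2 eY1 eY2 eY4
      by (simp add: Bochner_Integration.integral_add)
    have exQ2: "\<And>\<omega>. (X a \<omega> ^ 2 + ?Q \<omega>) ^ 2 = X a \<omega> ^ 4 + 2 * (X a \<omega> ^ 2 * ?Q \<omega>) + ?Q \<omega> ^ 2" by algebra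
    have nQ2: "integrable M (\<lambda>\<omega>. (X a \<omega> ^ 2 + ?Q \<omega>) ^ 2)" unfolding exQ2
      by (rule Bochner_Integration.integrable_add[OF Bochner_Integration.integrable_add[OF iY4 integrable_mult_right[OF iY2Q]] iQ2])
    have vQ2: "(\<integral>\<omega>. (X a \<omega> ^ 2 + ?Q \<omega>) ^ 2 \<partial>M) = s4 + 2 * (s2 * (k * s2)) + k * s4 + k * (k - 1) * s2 ^ 2" unfolding exQ2 using iY4 iY2Q iQ2 eY2Q eQ2 eY1 eY2 eY4
      by (simp add: Bochner_Integration.integral_add)
    have exC: "\<And>\<omega>. (X a \<omega> ^ 3 + ?C \<omega>) = X a \<omega> ^ 3 + ?C \<omega>" by simp
    have nC: "integrable M (\<lambda>\<omega>. (X a \<omega> ^ 3 + ?C \<omega>))"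
      by (rule Bochner_Integration.integrable_add[OF iY2(2) iC])
    have exCT: "\<And>\<omega>. (X a \<omega> ^ 3 + ?C \<omega>) * (X a \<omega> + ?T \<omega>) = X a \<omega> ^ 4 + (X a \<omega> ^ 3 * ?T \<omega>) + (X a \<omega> * ?C \<omega>) + (?C \<omega> * ?T \<omega>)" by algebra
    have nCT: "integrable M (\<lambda>\<omega>. (X a \<omega> ^ 3 + ?C \<omega>) * (X a \<omega> + ?T \<omega>))" unfolding exCT
      by (rule Bochner_Integration.integrable_add[OF Bochner_Integration.integrable_add[OF Bochner_Integration.integrable_add[OF iY4 iY3T] iYC] iCT])
    have vCT: "(\<integral>\<omega>. (X a \<omega> ^ 3 + ?C \<omega>) * (X a \<omega> + ?T \<omega>) \<partial>M) = s4 + 0 + 0 + k * s4" unfolding exCT using iY4 iY3T iYC iCT eY3T eYC eCT eY1 eY2 eY4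
      by (simp add: Bochner_Integration.integral_add)
    have exF: "\<And>\<omega>. (X a \<omega> ^ 4 + ?F \<omega>) = X a \<omega> ^ 4 + ?F \<omega>" by simp
    have nF: "integrable M (\<lambda>\<omega>. (X a \<omega> ^ 4 + ?F \<omega>))"
      by (rule Bochner_Integration.integrable_add[OF iY4 iF])
    have vF: "(\<integral>\<omega>. (X a \<omega> ^ 4 + ?F \<omega>) \<partial>M) = s4 + k * s4" using iY4 iF eF eY1 eY2 eY4
      by (simp add: Bochner_Integration.integral_add)
    have x: "\<And>p \<omega>. ps p (insert a J) (\<lambda>i. X i \<omega>) = X a \<omega> ^ p + ps p J (\<lambda>i. X i \<omega>)"
      using insert.hyps by (simp add: ps_insert)
    have x: "\<And>p \<omega>. ps p (insert a J) (\<lambda>i. X i \<omega>) = X a \<omega> ^ p + ps p J (\<lambda>i. X i \<omega>)"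
      using insert.hyps by (simp add: ps_insert)
    show ?case unfolding ck x power_one_right
      using nT1 nT2 nT3 nT4 nQ nQT nQT2 nQ2 nC nCT nF vT1 vT2 vT4 vQ vQT2 vQ2 vCT vF
      by (simp add: algebra_simps power2_eq_square)
  qed
qed

end


lemma indep_coords:
  assumes "I \<noteq> {}" "\<And>i. i \<in> I \<Longrightarrow> prob_space (M i)"
  shows "prob_space.indep_vars (PiM I M) M (\<lambda>i x. x i) I"
proof -
  interpret P: prob_space "PiM I M" by (rule prob_space_PiM) (rule assms(2))
  have d1: "distr (PiM I M) (PiM I M) (\<lambda>x. restrict (\<lambda>i. x i) I) = PiM I M"
  proof -
    have "distr (PiM I M) (PiM I M) (\<lambda>x. restrict (\<lambda>i. x i) I) = distr (PiM I M) (PiM I M) (\<lambda>x. x)"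
      by (intro distr_cong) (auto simp: space_PiM)
    also have "\<dots> = PiM I M" by (rule distr_id)
    finally show ?thesis .
  qed
  have d2: "PiM I (\<lambda>i. distr (PiM I M) (M i) (\<lambda>x. x i)) = PiM I M"
    by (intro PiM_cong refl distr_PiM_component assms(2)) auto
  show ?thesis
    by (subst P.indep_vars_iff_distr_eq_PiM'[OF assms(1)]) (auto simp: d1 d2)
qed

lemma PiM_comp_integral:
  fixes f :: "_ \<Rightarrow> real"
  assumes "\<And>i. i \<in> I \<Longrightarrow> prob_space (M i)" "i \<in> I" "f \<in> borel_measurable (M i)"
  shows "(\<integral>x. f (x i) \<partial>PiM I M) = integral\<^sup>L (M i) f"
    and "integrable (PiM I M) (\<lambda>x. f (x i)) \<longleftrightarrow> integrable (M i) f"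
proof -
  have mc: "(\<lambda>x. x i) \<in> measurable (PiM I M) (M i)"
    using assms(2) by (rule measurable_component_singleton)
  show "(\<integral>x. f (x i) \<partial>PiM I M) = integral\<^sup>L (M i) f"
    using integral_distr[OF mc assms(3)] distr_PiM_component[where M=M, OF assms(1,2)] by simp
  show "integrable (PiM I M) (\<lambda>x. f (x i)) \<longleftrightarrow> integrable (M i) f"
    using integrable_distr_eq[OF mc assms(3)] distr_PiM_component[where M=M, OF assms(1,2)] by simp
qed

lemma sq_dev_sum:
  fixes Z :: "'i \<Rightarrow> real"
  assumes "finite A" "card A = m" "m > 0"
  shows "(\<Sum>i\<in>A. (Z i - ps 1 A Z / m) ^ 2) = ps 2 A Z - ps 1 A Z ^ 2 / m"
proof -
  define S where "S = ps 1 A Z"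
  define t where "t = S / m"
  have St: "S = m * t" using assms by (simp add: t_def)
  have "(\<Sum>i\<in>A. (Z i - t) ^ 2) = (\<Sum>i\<in>A. Z i ^ 2 - 2 * t * Z i + t ^ 2)"
    by (intro sum.cong refl) (simp add: power2_diff)
  also have "\<dots> = ps 2 A Z - 2 * t * S + m * t ^ 2"
    using assms by (simp add: sum.distrib sum_subtractf sum_distrib_left[symmetric] ps_def S_def)
  also have "\<dots> = ps 2 A Z - S ^ 2 / m"
    using assms unfolding St by (simp add: field_simps power2_eq_square)
  finally show ?thesis unfolding t_def S_def .
qed

lemma quart_dev_sum:
  fixes Z :: "'i \<Rightarrow> real"
  assumes "finite A" "card A = m" "m > 0"
  shows "(\<Sum>i\<in>A. (Z i - ps 1 A Z / m) ^ 4) = ps 4 A Z - 4 * ps 3 A Z * ps 1 A Z / m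
      + 6 * ps 2 A Z * ps 1 A Z ^ 2 / m ^ 2 - 3 * ps 1 A Z ^ 4 / m ^ 3"
proof -
  define S where "S = ps 1 A Z"
  define t where "t = S / m"
  have St: "S = m * t" using assms by (simp add: t_def)
  have "(\<Sum>i\<in>A. (Z i - t) ^ 4) = (\<Sum>i\<in>A. Z i ^ 4 - 4 * t * Z i ^ 3 + 6 * t^2 * Z i ^ 2 - 4 * t ^ 3 * Z i + t ^ 4)"
    by (intro sum.cong refl) algebra
  also have "\<dots> = ps 4 A Z - 4 * t * ps 3 A Z + 6 * t^2 * ps 2 A Z - 4 * t ^ 3 * S + m * t ^ 4"
    using assms by (simp add: sum.distrib sum_subtractf sum_distrib_left[symmetric] ps_def S_def)
  also have "\<dots> = ps 4 A Z - 4 * ps 3 A Z * S / m + 6 * ps 2 A Z * S ^ 2 / m ^ 2 - 3 * S ^ 4 / m ^ 3"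
    using assms unfolding St by (simp add: field_simps power_mult_distrib) (simp add: eval_nat_numeral algebra_simps)
  finally show ?thesis unfolding t_def S_def .
qed



definition cm :: "nat \<Rightarrow> nat \<Rightarrow> (nat \<Rightarrow> real) \<Rightarrow> real" where
  "cm p n L = (\<Sum>j\<in>{1..n}. (L j - ps 1 {1..n} L / n) ^ p) / n"

lemma vhat_shift:
  assumes "m > 0"
  shows "vhat m Y = 1 / (real m - 1) * (ps 2 {1..m} (\<lambda>i. Y i - c) - ps 1 {1..m} (\<lambda>i. Y i - c) ^ 2 / m)"
proof -
  define S where "S = ps 1 {1..m} (\<lambda>i. Y i - c)"
  have s: "S = (\<Sum>j=1..m. Y j) - m * c"
    by (simp add: S_def ps_def sum_subtractf)
  have eq: "1 / real m * (\<Sum>j=1..m. Y j) = S / m + c"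
    using assms unfolding s by (simp add: field_simps)
  have "(\<Sum>i=1..m. (Y i - 1 / real m * (\<Sum>j=1..m. Y j))\<^sup>2)
      = (\<Sum>i\<in>{1..m}. ((Y i - c) - S / m) ^ 2)"
    by (intro sum.cong refl arg_cong[where f="\<lambda>x. x ^ 2"]) (use eq in linarith)
  also have "\<dots> = ps 2 {1..m} (\<lambda>i. Y i - c) - S ^ 2 / m"
    using sq_dev_sum[of "{1..m}" m "\<lambda>i. Y i - c"] assms unfolding S_def by simp
  finally show ?thesis unfolding vhat_def S_def by simp
qed

lemma sq_helper:
  fixes a q t mm :: real assumes "mm \<noteq> 0"
  shows "(a * (q - t ^ 2 / mm)) ^ 2 = a ^ 2 * (q ^ 2 - 2 / mm * (q * t ^ 2) + t ^ 4 / mm ^ 2)"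
  using assms by (simp add: field_simps power2_eq_square) (simp add: eval_nat_numeral algebra_simps)

lemma Unif_Pi:
  assumes "n \<ge> 1"
  shows "pmf_of_set (Ufuns m n) = Pi_pmf {1..m} undefined (\<lambda>_. pmf_of_set {1..n})"
proof -
  have "Ufuns m n = PiE_dflt {1..m} undefined (\<lambda>_. {1..n})"
    by (auto simp: Ufuns_def PiE_dflt_def PiE_def extensional_def)
  then show ?thesis using assms by (simp add: Pi_pmf_of_set)
qed

lemma Ufuns_ne: "n \<ge> 1 \<Longrightarrow> Ufuns m n \<noteq> {}" "finite (Ufuns m n)"
  by (auto simp: Ufuns_def PiE_eq_empty_iff finite_PiE)

lemma layerA:
  assumes n: "n \<ge> 1" and m: "m \<ge> 2"
  shows "EU m n L = cm 2 n L"
    and "VarU m n L = cm 4 n L / m + (3 - real m) / (real m * (real m - 1)) * cm 2 n L ^ 2"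
proof -
  let ?p = "pmf_of_set (Ufuns m n)"
  have finp: "finite (set_pmf ?p)" using Ufuns_ne(1)[OF n] Ufuns_ne(2) by simp
  have intp: "integrable (measure_pmf ?p) f" for f :: "_ \<Rightarrow> real"
    by (rule integrable_measure_pmf_finite[OF finp])
  define c where "c = ps 1 {1..n} L / n"
  define X where "X = (\<lambda>i (u :: nat \<Rightarrow> nat). L (u i) - c)"
  have ind: "prob_space.indep_vars (measure_pmf ?p) (\<lambda>_. borel) X {1..m}"
  proof -
    have "prob_space.indep_vars (measure_pmf ?p) (\<lambda>_. count_space UNIV) (\<lambda>x f. f x) {1..m}"
      unfolding Unif_Pi[OF n] by (rule indep_vars_Pi_pmf) simp
    then show ?thesis unfolding X_def
      by (rule prob_space.indep_vars_compose2[OF prob_space_measure_pmf _, where Y="\<lambda>i j. L j - c"]) simp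
  qed
  have comp: "(\<integral>u. g (u i) \<partial>measure_pmf ?p) = (\<Sum>j\<in>{1..n}. g j) / n" if "i \<in> {1..m}" for g i
  proof -
    have "(\<integral>u. g (u i) \<partial>measure_pmf ?p) = (\<integral>j. g j \<partial>measure_pmf (map_pmf (\<lambda>u. u i) ?p))"
      by (simp add: integral_map_pmf)
    also have "map_pmf (\<lambda>u. u i) ?p = pmf_of_set {1..n}"
      unfolding Unif_Pi[OF n] using that by (simp add: Pi_pmf_component)
    finally show ?thesis using n by (simp add: integral_pmf_of_set)
  qed
  have Mo: "(\<integral>u. X i u \<partial>measure_pmf ?p) = 0" if "i \<in> {1..m}" for i
  proof -
    have "(\<integral>u. X i u \<partial>measure_pmf ?p) = (\<Sum>j\<in>{1..n}. L j - c) / n"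
      unfolding X_def using comp[OF that, of "\<lambda>j. L j - c"] by simp
    also have "\<dots> = 0" using n by (simp add: sum_subtractf c_def ps_def)
    finally show ?thesis .
  qed
  have M2: "(\<integral>u. X i u ^ 2 \<partial>measure_pmf ?p) = cm 2 n L" if "i \<in> {1..m}" for i
    unfolding X_def using comp[OF that, of "\<lambda>j. (L j - c) ^ 2"] by (simp add: cm_def c_def)
  have M4: "(\<integral>u. X i u ^ 4 \<partial>measure_pmf ?p) = cm 4 n L" if "i \<in> {1..m}" for i
    unfolding X_def using comp[OF that, of "\<lambda>j. (L j - c) ^ 4"] by (simp add: cm_def c_def)
  note mom = prob_space.moments_induct[OF prob_space_measure_pmf _ ind intp Mo M2 M4 subset_refl, simplified]
  have vh: "vhat m (subsample L u) = 1 / (real m - 1) * (ps 2 {1..m} (\<lambda>i. X i u) - ps 1 {1..m} (\<lambda>i. X i u) ^ 2 / m)" for u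
    unfolding X_def subsample_def using m by (intro vhat_shift) simp
  have E1: "(\<integral>u. vhat m (subsample L u) \<partial>measure_pmf ?p) = cm 2 n L"
    unfolding vh using mom m intp
    by (simp add: Bochner_Integration.integral_diff field_simps)
  then show "EU m n L = cm 2 n L" unfolding EU_def Unif_def .
  let ?Q = "\<lambda>u. ps 2 {1..m} (\<lambda>i. X i u)"
  let ?T = "\<lambda>u. ps 1 {1..m} (\<lambda>i. X i u)"
  have sq: "(vhat m (subsample L u))^2 = (1 / (real m - 1))^2 * (?Q u ^ 2 - 2 / m * (?Q u * ?T u ^ 2) + ?T u ^ 4 / real m ^ 2)" for u
    unfolding vh using m by (intro sq_helper) simp
  have E2: "(\<integral>u. (vhat m (subsample L u))^2 \<partial>measure_pmf ?p) = (1 / (real m - 1))^2 *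
     ((m * cm 4 n L + m * (real m - 1) * cm 2 n L ^ 2) - 2 / m * (m * cm 4 n L + m * (real m - 1) * cm 2 n L ^ 2)
      + (m * cm 4 n L + 3 * m * (real m - 1) * cm 2 n L ^ 2) / real m ^ 2)"
    unfolding sq using mom intp
    by (simp add: Bochner_Integration.integral_diff Bochner_Integration.integral_add)
  have "VarU m n L = (\<integral>u. (vhat m (subsample L u))^2 \<partial>measure_pmf ?p) - (cm 2 n L)^2"
    unfolding VarU_def Unif_def E1[symmetric]
    by (rule prob_space.variance_eq[OF prob_space_measure_pmf intp intp])
  also have "\<dots> = cm 4 n L / m + (3 - real m) / (real m * (real m - 1)) * cm 2 n L ^ 2"
    unfolding E2 using m by (simp add: field_simps) (simp add: algebra_simps power2_eq_square)
  finally show "VarU m n L = cm 4 n L / m + (3 - real m) / (real m * (real m - 1)) * cm 2 n L ^ 2" .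
qed



lemma layerB:
  assumes D: "prob_space D" and sD: "sets D = sets borel" and i4: "integrable D (\<lambda>x. x ^ 4)"
    and m1: "(\<integral>x. x \<partial>D) = 0" and n: "n \<ge> 1"
  defines "\<mu>2 \<equiv> \<integral>x. x ^ 2 \<partial>D" and "\<mu>4 \<equiv> \<integral>x. x ^ 4 \<partial>D"
  shows "integrable (sample_meas D n) (cm 2 n)"
    "(\<integral>L. cm 2 n L \<partial>sample_meas D n) = (real n - 1) / real n * \<mu>2"
    "integrable (sample_meas D n) (\<lambda>L. cm 2 n L ^ 2)"
    "(\<integral>L. cm 2 n L ^ 2 \<partial>sample_meas D n) =
       ((real n * \<mu>4 + real n * (real n - 1) * \<mu>2 ^ 2) - 2 * (real n * \<mu>4 + real n * (real n - 1) * \<mu>2 ^ 2) / real n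
        + (real n * \<mu>4 + 3 * real n * (real n - 1) * \<mu>2 ^ 2) / real n ^ 2) / real n ^ 2"
    "integrable (sample_meas D n) (cm 4 n)"
    "(\<integral>L. cm 4 n L \<partial>sample_meas D n) =
       (real n * \<mu>4 - 4 * (real n * \<mu>4) / real n + 6 * (real n * \<mu>4 + real n * (real n - 1) * \<mu>2 ^ 2) / real n ^ 2
        - 3 * (real n * \<mu>4 + 3 * real n * (real n - 1) * \<mu>2 ^ 2) / real n ^ 3) / real n"
proof -
  let ?M = "sample_meas D n"
  have PM: "prob_space ?M" unfolding sample_meas_def by (rule prob_space_PiM) (rule D)
  have mD: "borel_measurable D = borel_measurable borel"
    by (rule measurable_cong_sets[OF sD refl])
  have ind0: "prob_space.indep_vars ?M (\<lambda>_. D) (\<lambda>i x. x i) {1..n}"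
    unfolding sample_meas_def using n by (intro indep_coords D) auto
  have ind: "prob_space.indep_vars ?M (\<lambda>_. borel) (\<lambda>i x. x i) {1..n}"
    using prob_space.indep_vars_compose2[OF PM ind0, of "\<lambda>_ x. x" "\<lambda>_. borel"]
    by (simp add: measurable_ident_sets sD)
  have comp: "(\<integral>L. f (L i) \<partial>?M) = integral\<^sup>L D f" "integrable ?M (\<lambda>L. f (L i)) \<longleftrightarrow> integrable D f"
    if "i \<in> {1..n}" "f \<in> borel_measurable borel" for i and f :: "real \<Rightarrow> real"
  proof -
    have pc: "f \<in> borel_measurable D" unfolding mD by (rule that(2))
    show "(\<integral>L. f (L i) \<partial>?M) = integral\<^sup>L D f"
      unfolding sample_meas_def by (rule PiM_comp_integral(1)[where M="\<lambda>_. D", OF D that(1) pc])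
    show "integrable ?M (\<lambda>L. f (L i)) \<longleftrightarrow> integrable D f"
      unfolding sample_meas_def by (rule PiM_comp_integral(2)[where M="\<lambda>_. D", OF D that(1) pc])
  qed
  have ii4: "integrable ?M (\<lambda>L. L i ^ 4)" if "i \<in> {1..n}" for i
    using comp(2)[OF that, of "\<lambda>x. x ^ 4"] i4 by simp
  have mm1: "(\<integral>L. L i \<partial>?M) = 0" if "i \<in> {1..n}" for i
    using comp(1)[OF that, of "\<lambda>x. x"] m1 by simp
  have mm2: "(\<integral>L. L i ^ 2 \<partial>?M) = \<mu>2" if "i \<in> {1..n}" for i
    using comp(1)[OF that, of "\<lambda>x. x ^ 2"] unfolding \<mu>2_def by simp
  have mm4: "(\<integral>L. L i ^ 4 \<partial>?M) = \<mu>4" if "i \<in> {1..n}" for i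
    using comp(1)[OF that, of "\<lambda>x. x ^ 4"] unfolding \<mu>4_def by simp
  note mom = prob_space.moments_induct[OF PM _ ind ii4 mm1 mm2 mm4 subset_refl, simplified]
  have c2: "cm 2 n L = (ps 2 {1..n} L - ps 1 {1..n} L ^ 2 / n) / n" for L
    unfolding cm_def using sq_dev_sum[of "{1..n}" n L] n by simp
  have c2sq: "cm 2 n L ^ 2 = (ps 2 {1..n} L ^ 2 - 2 * (ps 2 {1..n} L * ps 1 {1..n} L ^ 2) / n
      + ps 1 {1..n} L ^ 4 / n ^ 2) / n ^ 2" for L
    unfolding c2 using n by (simp add: field_simps power2_eq_square) (simp add: eval_nat_numeral algebra_simps)
  have c4: "cm 4 n L = (ps 4 {1..n} L - 4 * (ps 3 {1..n} L * ps 1 {1..n} L) / n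
      + 6 * (ps 2 {1..n} L * ps 1 {1..n} L ^ 2) / n ^ 2 - 3 * ps 1 {1..n} L ^ 4 / n ^ 3) / n" for L
    unfolding cm_def using quart_dev_sum[of "{1..n}" n L] n by simp
  show "integrable ?M (cm 2 n)" unfolding c2 using mom by simp
  show "(\<integral>L. cm 2 n L \<partial>?M) = (real n - 1) / real n * \<mu>2"
    unfolding c2 using mom n by (simp add: Bochner_Integration.integral_diff field_simps)
  show "integrable ?M (\<lambda>L. cm 2 n L ^ 2)" unfolding c2sq using mom by simp
  show "(\<integral>L. cm 2 n L ^ 2 \<partial>?M) =
       ((real n * \<mu>4 + real n * (real n - 1) * \<mu>2 ^ 2) - 2 * (real n * \<mu>4 + real n * (real n - 1) * \<mu>2 ^ 2) / real n
        + (real n * \<mu>4 + 3 * real n * (real n - 1) * \<mu>2 ^ 2) / real n ^ 2) / real n ^ 2"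
    unfolding c2sq using mom n by (simp add: Bochner_Integration.integral_diff Bochner_Integration.integral_add)
  show "integrable ?M (cm 4 n)" unfolding c4 using mom by simp
  show "(\<integral>L. cm 4 n L \<partial>?M) =
       (real n * \<mu>4 - 4 * (real n * \<mu>4) / real n + 6 * (real n * \<mu>4 + real n * (real n - 1) * \<mu>2 ^ 2) / real n ^ 2
        - 3 * (real n * \<mu>4 + 3 * real n * (real n - 1) * \<mu>2 ^ 2) / real n ^ 3) / real n"
    unfolding c4 using mom n by (simp add: Bochner_Integration.integral_diff Bochner_Integration.integral_add)
qed



lemma Unif_prob: "prob_space (Unif m n)" unfolding Unif_def by (rule prob_space_measure_pmf)

lemma Unif_int: "n \<ge> 1 \<Longrightarrow> integrable (Unif m n) (f :: _ \<Rightarrow> real)"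
  unfolding Unif_def by (rule integrable_measure_pmf_finite) (simp add: Ufuns_ne)

lemma Unif_meas: "f \<in> borel_measurable (Unif m n)"
  unfolding Unif_def by simp

lemma layerBag:
  assumes n: "n \<ge> 1" and m: "m \<ge> 2" and N: "N \<ge> 1"
  shows "integrable (bag_meas m n N) (\<lambda>B. vtilde m N L B)"
    "(\<integral>B. vtilde m N L B \<partial>bag_meas m n N) = EU m n L"
    "integrable (bag_meas m n N) (\<lambda>B. vtilde m N L B ^ 2)"
    "(\<integral>B. vtilde m N L B ^ 2 \<partial>bag_meas m n N) = EU m n L ^ 2 + VarU m n L / N"
proof -
  let ?M = "bag_meas m n N"
  have PM: "prob_space ?M" unfolding bag_meas_def by (rule prob_space_PiM) (rule Unif_prob)
  define W where "W = (\<lambda>u. vhat m (subsample L u) - EU m n L)"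
  have ind0: "prob_space.indep_vars ?M (\<lambda>_. Unif m n) (\<lambda>i x. x i) {1..N}"
    unfolding bag_meas_def using N by (intro indep_coords Unif_prob) auto
  have ind: "prob_space.indep_vars ?M (\<lambda>_. borel) (\<lambda>i B. W (B i)) {1..N}"
    using prob_space.indep_vars_compose2[OF PM ind0, of "\<lambda>_. W" "\<lambda>_. borel"]
    by (simp add: Unif_meas)
  have comp: "(\<integral>B. f (B i) \<partial>?M) = integral\<^sup>L (Unif m n) f" "integrable ?M (\<lambda>B. f (B i))"
    if "i \<in> {1..N}" for i and f :: "_ \<Rightarrow> real"
  proof -
    show "(\<integral>B. f (B i) \<partial>?M) = integral\<^sup>L (Unif m n) f"
      unfolding bag_meas_def by (rule PiM_comp_integral(1)[where M="\<lambda>_. Unif m n", OF Unif_prob that Unif_meas])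
    show "integrable ?M (\<lambda>B. f (B i))"
      unfolding bag_meas_def PiM_comp_integral(2)[where M="\<lambda>_. Unif m n", OF Unif_prob that Unif_meas]
      using n by (rule Unif_int)
  qed
  have ii4: "integrable ?M (\<lambda>B. W (B i) ^ 4)" if "i \<in> {1..N}" for i
    using comp(2)[OF that, of "\<lambda>u. W u ^ 4"] by simp
  have mm1: "(\<integral>B. W (B i) \<partial>?M) = 0" if "i \<in> {1..N}" for i
    using comp(1)[OF that, of W] Unif_int[OF n] unfolding W_def EU_def
    by (simp add: Bochner_Integration.integral_diff prob_space.prob_space[OF Unif_prob])
  have mm2: "(\<integral>B. W (B i) ^ 2 \<partial>?M) = VarU m n L" if "i \<in> {1..N}" for i
    using comp(1)[OF that, of "\<lambda>u. W u ^ 2"] unfolding W_def VarU_def EU_def by simp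
  have mm4: "(\<integral>B. W (B i) ^ 4 \<partial>?M) = (\<integral>u. W u ^ 4 \<partial>Unif m n)" if "i \<in> {1..N}" for i
    using comp(1)[OF that, of "\<lambda>u. W u ^ 4"] by simp
  note mom = prob_space.moments_induct[OF PM _ ind ii4 mm1 mm2 mm4 subset_refl, simplified]
  have vt: "vtilde m N L B = EU m n L + ps 1 {1..N} (\<lambda>i. W (B i)) / N" for B
  proof -
    have "vtilde m N L B = (1 / N) * (\<Sum>i=1..N. W (B i) + EU m n L)"
      unfolding vtilde_def W_def by simp
    also have "\<dots> = EU m n L + ps 1 {1..N} (\<lambda>i. W (B i)) / N"
      using N by (simp add: sum.distrib ps_def field_simps)
    finally show ?thesis .
  qed
  have vt2: "vtilde m N L B ^ 2 = EU m n L ^ 2 + 2 * EU m n L / N * ps 1 {1..N} (\<lambda>i. W (B i))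
     + ps 1 {1..N} (\<lambda>i. W (B i)) ^ 2 / real N ^ 2" for B
    unfolding vt using N by (simp add: power2_eq_square field_simps)
  have ic: "integrable ?M (\<lambda>B. c)" for c :: real
    using PM by (simp add: prob_space_def finite_measure.integrable_const)
  show "integrable ?M (\<lambda>B. vtilde m N L B)" unfolding vt using mom ic by simp
  show "(\<integral>B. vtilde m N L B \<partial>?M) = EU m n L" unfolding vt using mom ic
    by (simp add: prob_space.prob_space[OF PM])
  show "integrable ?M (\<lambda>B. vtilde m N L B ^ 2)" unfolding vt2 using mom ic by simp
  show "(\<integral>B. vtilde m N L B ^ 2 \<partial>?M) = EU m n L ^ 2 + VarU m n L / N" unfolding vt2 using mom N ic
    by (simp add: prob_space.prob_space[OF PM] power2_eq_square)
qed



lemma vhat_nonneg: "vhat m Y \<ge> 0"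
proof (cases "m = 0")
  case True then show ?thesis by (simp add: vhat_def)
next
  case False then show ?thesis unfolding vhat_def by (intro mult_nonneg_nonneg sum_nonneg) auto
qed

lemma vtilde_nonneg: "vtilde m N L B \<ge> 0"
  unfolding vtilde_def by (intro mult_nonneg_nonneg sum_nonneg vhat_nonneg) auto

lemma comp_any:
  assumes sD: "sets D = sets borel"
  shows "(\<lambda>L. L k) \<in> borel_measurable (sample_meas D n)"
proof (cases "k \<in> {1..n}")
  case True
  have "(\<lambda>L. L k) \<in> measurable (sample_meas D n) D"
    unfolding sample_meas_def using True by (rule measurable_component_singleton)
  then show ?thesis unfolding measurable_cong_sets[OF refl sD, symmetric] .
next
  case False
  have "(\<lambda>L. undefined) \<in> borel_measurable (sample_meas D n)" by simp
  then show ?thesis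
    by (rule measurable_cong[THEN iffD1, rotated]) (use False in \<open>auto simp: sample_meas_def space_PiM PiE_def extensional_def\<close>)
qed

lemma key_meas:
  assumes sD: "sets D = sets borel" and i: "i \<in> {1..N}"
  shows "(\<lambda>z. fst z (snd z i j)) \<in> borel_measurable (joint_meas D n m N)"
proof (rule measurable_compose_countable'[where I=UNIV and f="\<lambda>k z. fst z k" and g="\<lambda>z. snd z i j"])
  show "(\<lambda>z. fst z k) \<in> borel_measurable (joint_meas D n m N)" for k
    unfolding joint_meas_def by (rule measurable_compose[OF measurable_fst comp_any[OF sD]])
  have "(\<lambda>B. B i) \<in> measurable (bag_meas m n N) (Unif m n)"
    unfolding bag_meas_def using i by (rule measurable_component_singleton)
  moreover have "(\<lambda>u. u j) \<in> measurable (Unif m n) (count_space UNIV)"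
    unfolding Unif_def by simp
  ultimately have "(\<lambda>B. B i j) \<in> measurable (bag_meas m n N) (count_space UNIV)"
    by (rule measurable_compose[where f="\<lambda>B. B i" and g="\<lambda>u. u j"])
  then show "(\<lambda>z. snd z i j) \<in> measurable (joint_meas D n m N) (count_space UNIV)"
    unfolding joint_meas_def by (rule measurable_compose[OF measurable_snd])
qed simp

lemma vt_meas:
  assumes sD: "sets D = sets borel"
  shows "(\<lambda>z. vtilde m N (fst z) (snd z)) \<in> borel_measurable (joint_meas D n m N)"
  unfolding vtilde_def vhat_def subsample_def
  by (intro borel_measurable_times borel_measurable_sum borel_measurable_power borel_measurable_diff
      measurable_const key_meas[OF sD]) auto

lemma helperK:
  fixes n K a b X Y :: real assumes "n > 0" "K \<noteq> 0"
  shows "(n - 1) / (n ^ 3 * K) * (n^2 * X * b + n^2 * Y * a^2)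
     = (n - 1) / (n * K) * Y * a ^ 2 + (n - 1) / (n * K) * X * b"
  using assms by (simp add: field_simps power2_eq_square power3_eq_cube)

lemma helperXY:
  fixes n m a b X Y :: real assumes "n > 0" "m > 1" "m - 1 \<noteq> 0"
  shows "(n - 1) / (n ^ 3 * m * (m - 1)) * (n^2 * X * b + n^2 * Y * a^2)
     = (n - 1) / (n * m * (m - 1)) * Y * a ^ 2 + (n - 1) / (n * m * (m - 1)) * X * b"
  using helperK[of n "m * (m - 1)" X b Y a] assms by (simp add: mult.assoc)

lemma arith3:
  fixes n m a b :: real assumes n: "n > 0" and m: "m > 1"
  shows "(n * b - 4 * (n * b) / n + 6 * (n * b + n * (n - 1) * a ^ 2) / n ^ 2
        - 3 * (n * b + 3 * n * (n - 1) * a ^ 2) / n ^ 3) / n / m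
     + (3 - m) / (m * (m - 1)) * (((n * b + n * (n - 1) * a ^ 2) - 2 * (n * b + n * (n - 1) * a ^ 2) / n
        + (n * b + 3 * n * (n - 1) * a ^ 2) / n ^ 2) / n ^ 2)
   = (n - 1) / (n * m * (m - 1)) *
           (3 * m - 3 + (n ^ 2 - 2 * n + 3) / n ^ 2 * (6 - 4 * m)) * a ^ 2
         + (n - 1) / (n * m * (m - 1)) *
           (m - 1 + (n - 1) / n ^ 2 * (6 - 4 * m)) * b"
proof -
  have m1: "m - 1 \<noteq> 0" using m by simp
  have V4: "(n * b - 4 * (n * b) / n + 6 * (n * b + n * (n - 1) * a ^ 2) / n ^ 2
        - 3 * (n * b + 3 * n * (n - 1) * a ^ 2) / n ^ 3) / n = (n - 1) / n ^ 3 * ((n^2 - 3*n + 3) * b + 3 * (2*n - 3) * a^2)"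
    using n by (simp add: field_simps, (simp add: algebra_simps eval_nat_numeral)?)
  have V2: "((n * b + n * (n - 1) * a ^ 2) - 2 * (n * b + n * (n - 1) * a ^ 2) / n
        + (n * b + 3 * n * (n - 1) * a ^ 2) / n ^ 2) / n ^ 2 = (n - 1) / n ^ 3 * ((n - 1) * b + (n^2 - 2*n + 3) * a^2)"
    using n by (simp add: field_simps, (simp add: algebra_simps eval_nat_numeral)?)
  have "(n - 1) / n ^ 3 * ((n^2 - 3*n + 3) * b + 3 * (2*n - 3) * a^2) / m
      + (3 - m) / (m * (m - 1)) * ((n - 1) / n ^ 3 * ((n - 1) * b + (n^2 - 2*n + 3) * a^2))
     = (n - 1) / (n ^ 3 * m * (m - 1)) * (((n^2 - 3*n + 3) * (m - 1) + (3 - m) * (n - 1)) * b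
        + (3 * (2*n - 3) * (m - 1) + (3 - m) * (n^2 - 2*n + 3)) * a^2)"
    using n m m1 by (simp add: field_simps)
  also have "\<dots> = (n - 1) / (n * m * (m - 1)) *
           (3 * m - 3 + (n ^ 2 - 2 * n + 3) / n ^ 2 * (6 - 4 * m)) * a ^ 2
         + (n - 1) / (n * m * (m - 1)) *
           (m - 1 + (n - 1) / n ^ 2 * (6 - 4 * m)) * b"
  proof -
    have e1: "(n^2 - 3*n + 3) * (m - 1) + (3 - m) * (n - 1) = n^2 * (m - 1 + (n - 1) / n ^ 2 * (6 - 4 * m))"
      using n by (simp add: field_simps, (simp add: algebra_simps eval_nat_numeral)?)
    have e2: "3 * (2*n - 3) * (m - 1) + (3 - m) * (n^2 - 2*n + 3) = n^2 * (3 * m - 3 + (n ^ 2 - 2 * n + 3) / n ^ 2 * (6 - 4 * m))"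
      using n by (simp add: field_simps, (simp add: algebra_simps eval_nat_numeral)?)
    show ?thesis unfolding e1 e2 using n m m1 by (rule helperXY)
  qed
  finally show ?thesis unfolding V4 V2 by (simp add: divide_simps)
qed

lemma arith4:
  fixes n a b :: real assumes n: "n > 0"
  shows "((n * b + n * (n - 1) * a ^ 2) - 2 * (n * b + n * (n - 1) * a ^ 2) / n
        + (n * b + 3 * n * (n - 1) * a ^ 2) / n ^ 2) / n ^ 2 - ((n - 1) / n * a) ^ 2
   = (3 - n) * (n - 1) / n ^ 3 * a ^ 2 + (n - 1) ^ 2 / n ^ 3 * b"
  using n by (simp add: field_simps, (simp add: algebra_simps eval_nat_numeral)?)

theorem theorem2:
  fixes D :: "real measure" and n m N :: nat
  assumes "prob_space D" and "sets D = sets borel"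
    and "integrable D (\<lambda>x. x ^ 4)"
    and "(\<integral>x. x \<partial>D) = 0"
    and "n \<ge> 2" and "m \<ge> 2" and "N \<ge> 1"
  defines "\<mu>2 \<equiv> \<integral>x. x ^ 2 \<partial>D" and "\<mu>4 \<equiv> \<integral>x. x ^ 4 \<partial>D"
  shows
    "(prob_space.expectation (joint_meas D n m N) (\<lambda>(L, B). vtilde m N L B)
       = (real n - 1) / real n * \<mu>2) \<and>
    (prob_space.variance (joint_meas D n m N) (\<lambda>(L, B). vtilde m N L B)
       = (1 / real N) * prob_space.expectation (sample_meas D n) (VarU m n)
         + prob_space.variance (sample_meas D n) (EU m n)) \<and>
    (prob_space.expectation (sample_meas D n) (VarU m n)
       = (real n - 1) / (real n * real m * (real m - 1)) *
           (3 * real m - 3 + (real n ^ 2 - 2 * real n + 3) / real n ^ 2 * (6 - 4 * real m)) * \<mu>2 ^ 2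
         + (real n - 1) / (real n * real m * (real m - 1)) *
           (real m - 1 + (real n - 1) / real n ^ 2 * (6 - 4 * real m)) * \<mu>4) \<and>
    (prob_space.variance (sample_meas D n) (EU m n)
       = (3 - real n) * (real n - 1) / real n ^ 3 * \<mu>2 ^ 2
         + (real n - 1) ^ 2 / real n ^ 3 * \<mu>4) \<and>
    (prob_space.expectation (joint_meas D n m N) (\<lambda>(L, B). (vtilde m N L B - \<mu>2) ^ 2)
       = prob_space.variance (joint_meas D n m N) (\<lambda>(L, B). vtilde m N L B)
         + 1 / real n ^ 2 * \<mu>2 ^ 2)"
proof -
  have n1: "n \<ge> 1" using assms(5) by simp
  have m2: "m \<ge> 2" by fact
  have N1: "N \<ge> 1" by fact
  note LA = layerA[OF n1 m2]
  note LB = layerB[OF assms(1-4) n1, folded \<mu>2_def \<mu>4_def]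
  note BG = layerBag[OF n1 m2 N1]
  let ?S = "sample_meas D n"
  let ?B = "bag_meas m n N"
  have PS: "prob_space ?S" unfolding sample_meas_def by (rule prob_space_PiM) (rule assms(1))
  have PB: "prob_space ?B" unfolding bag_meas_def by (rule prob_space_PiM) (rule Unif_prob)
  interpret S: prob_space ?S by (rule PS)
  interpret B: prob_space ?B by (rule PB)
  interpret P: pair_prob_space ?S ?B ..
  have PJ: "prob_space (joint_meas D n m N)" unfolding joint_meas_def by (rule prob_space_pair[OF PS PB])
  define f where "f = (\<lambda>z. vtilde m N (fst z) (snd z))"
  have ef: "(\<lambda>(L, B). vtilde m N L B) = f" by (auto simp: f_def)
  have ef2: "(\<lambda>(L, B). (vtilde m N L B - \<mu>2) ^ 2) = (\<lambda>z. (f z - \<mu>2) ^ 2)" by (auto simp: f_def)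
  have fm: "f \<in> borel_measurable (?S \<Otimes>\<^sub>M ?B)"
    using vt_meas[OF assms(2), of m N n] unfolding f_def joint_meas_def .
  have EUeq: "EU m n = cm 2 n" using LA(1) by (intro ext) simp
  have VUeq: "VarU m n = (\<lambda>L. cm 4 n L / m + (3 - real m) / (real m * (real m - 1)) * cm 2 n L ^ 2)"
    using LA(2) by (intro ext) simp
  have iVU: "integrable ?S (VarU m n)" unfolding VUeq using LB by simp
  have iEU2: "integrable ?S (\<lambda>L. EU m n L ^ 2)" unfolding EUeq using LB by simp
  have fi: "integrable (?S \<Otimes>\<^sub>M ?B) f"
  proof (rule P.Fubini_integrable[OF fm])
    have "(\<lambda>L. \<integral>B. norm (f (L, B)) \<partial>?B) = EU m n"
      using BG(2) vtilde_nonneg by (simp add: f_def)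
    then show "integrable ?S (\<lambda>L. \<integral>B. norm (f (L, B)) \<partial>?B)"
      unfolding EUeq using LB(1) by simp
    show "AE L in ?S. integrable ?B (\<lambda>B. f (L, B))"
      using BG(1) by (simp add: f_def)
  qed
  have fi2: "integrable (?S \<Otimes>\<^sub>M ?B) (\<lambda>z. f z ^ 2)"
  proof (rule P.Fubini_integrable)
    show "(\<lambda>z. f z ^ 2) \<in> borel_measurable (?S \<Otimes>\<^sub>M ?B)" using fm by simp
    have "(\<lambda>L. \<integral>B. norm (f (L, B) ^ 2) \<partial>?B) = (\<lambda>L. EU m n L ^ 2 + VarU m n L / N)"
      using BG(4) by (simp add: f_def)
    then show "integrable ?S (\<lambda>L. \<integral>B. norm (f (L, B) ^ 2) \<partial>?B)"
      using iVU iEU2 by simp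
    show "AE L in ?S. integrable ?B (\<lambda>B. f (L, B) ^ 2)"
      using BG(3) by (simp add: f_def)
  qed
  have Ef: "(\<integral>z. f z \<partial>(?S \<Otimes>\<^sub>M ?B)) = (\<integral>L. EU m n L \<partial>?S)"
    using P.integral_fst'[OF fi] BG(2) by (simp add: f_def)
  have Ef2: "(\<integral>z. f z ^ 2 \<partial>(?S \<Otimes>\<^sub>M ?B)) = (\<integral>L. EU m n L ^ 2 \<partial>?S) + (\<integral>L. VarU m n L \<partial>?S) / N"
    using P.integral_fst'[OF fi2] BG(4) iVU iEU2 by (simp add: f_def)
  define V1 where "V1 = (\<integral>L. cm 2 n L \<partial>?S)"
  define V2 where "V2 = (\<integral>L. cm 2 n L ^ 2 \<partial>?S)"
  define V4 where "V4 = (\<integral>L. cm 4 n L \<partial>?S)"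
  have EEU: "(\<integral>L. EU m n L \<partial>?S) = V1" unfolding EUeq V1_def ..
  have EEU2: "(\<integral>L. EU m n L ^ 2 \<partial>?S) = V2" unfolding EUeq V2_def ..
  have EVU: "(\<integral>L. VarU m n L \<partial>?S) = V4 / m + (3 - real m) / (real m * (real m - 1)) * V2"
    unfolding VUeq V4_def V2_def using LB by simp
  have varEU: "prob_space.variance ?S (EU m n) = V2 - V1 ^ 2"
    unfolding EUeq V1_def V2_def using S.variance_eq[of "cm 2 n"] LB by simp
  have varf: "prob_space.variance (joint_meas D n m N) f = V2 + (V4 / m + (3 - real m) / (real m * (real m - 1)) * V2) / N - V1 ^ 2"
    using prob_space.variance_eq[OF PJ, of f] fi fi2 Ef Ef2 EEU EEU2 EVU
    unfolding joint_meas_def by simp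
  have mse: "prob_space.expectation (joint_meas D n m N) (\<lambda>z. (f z - \<mu>2) ^ 2)
      = (\<integral>z. f z ^ 2 \<partial>(?S \<Otimes>\<^sub>M ?B)) - 2 * \<mu>2 * V1 + \<mu>2 ^ 2"
  proof -
    have "(\<lambda>z. (f z - \<mu>2) ^ 2) = (\<lambda>z. f z ^ 2 - 2 * \<mu>2 * f z + \<mu>2 ^ 2)"
      by (intro ext) (simp add: power2_diff)
    then show ?thesis unfolding joint_meas_def using fi fi2 Ef EEU P.prob_space
      by (simp add: Bochner_Integration.integral_diff Bochner_Integration.integral_add)
  qed
  have V1v: "V1 = (real n - 1) / real n * \<mu>2" unfolding V1_def using LB by simp
  have nr: "real n > 0" using n1 by simp
  have mr: "real m > 1" using m2 by simp
  have V2v: "V2 = ((real n * \<mu>4 + real n * (real n - 1) * \<mu>2 ^ 2) - 2 * (real n * \<mu>4 + real n * (real n - 1) * \<mu>2 ^ 2) / real n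
        + (real n * \<mu>4 + 3 * real n * (real n - 1) * \<mu>2 ^ 2) / real n ^ 2) / real n ^ 2"
    unfolding V2_def using LB by simp
  have V4v: "V4 = (real n * \<mu>4 - 4 * (real n * \<mu>4) / real n + 6 * (real n * \<mu>4 + real n * (real n - 1) * \<mu>2 ^ 2) / real n ^ 2
        - 3 * (real n * \<mu>4 + 3 * real n * (real n - 1) * \<mu>2 ^ 2) / real n ^ 3) / real n"
    unfolding V4_def using LB by simp
  have c3: "V4 / m + (3 - real m) / (real m * (real m - 1)) * V2 = (real n - 1) / (real n * real m * (real m - 1)) *
           (3 * real m - 3 + (real n ^ 2 - 2 * real n + 3) / real n ^ 2 * (6 - 4 * real m)) * \<mu>2 ^ 2
         + (real n - 1) / (real n * real m * (real m - 1)) *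
           (real m - 1 + (real n - 1) / real n ^ 2 * (6 - 4 * real m)) * \<mu>4"
    unfolding V4v V2v by (rule arith3[OF nr mr])
  have c4: "V2 - V1 ^ 2 = (3 - real n) * (real n - 1) / real n ^ 3 * \<mu>2 ^ 2
         + (real n - 1) ^ 2 / real n ^ 3 * \<mu>4"
    unfolding V2v V1v by (rule arith4[OF nr])
  have c5: "(V1 - \<mu>2) ^ 2 = 1 / real n ^ 2 * \<mu>2 ^ 2"
    unfolding V1v using nr by (simp add: field_simps power2_eq_square)
  show ?thesis
    unfolding ef ef2
  proof (intro conjI)
    show "prob_space.expectation (joint_meas D n m N) f = (real n - 1) / real n * \<mu>2"
      unfolding joint_meas_def Ef EEU V1v ..
    show "prob_space.variance (joint_meas D n m N) f = 1 / real N * prob_space.expectation ?S (VarU m n) + prob_space.variance ?S (EU m n)"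
      unfolding varf varEU EVU by (simp add: field_simps)
    show "prob_space.expectation ?S (VarU m n) = (real n - 1) / (real n * real m * (real m - 1)) *
           (3 * real m - 3 + (real n ^ 2 - 2 * real n + 3) / real n ^ 2 * (6 - 4 * real m)) * \<mu>2 ^ 2
         + (real n - 1) / (real n * real m * (real m - 1)) *
           (real m - 1 + (real n - 1) / real n ^ 2 * (6 - 4 * real m)) * \<mu>4"
      unfolding EVU c3 ..
    show "prob_space.variance ?S (EU m n) = (3 - real n) * (real n - 1) / real n ^ 3 * \<mu>2 ^ 2
         + (real n - 1) ^ 2 / real n ^ 3 * \<mu>4"
      unfolding varEU c4 ..
    show "prob_space.expectation (joint_meas D n m N) (\<lambda>z. (f z - \<mu>2) ^ 2) =
        prob_space.variance (joint_meas D n m N) f + 1 / real n ^ 2 * \<mu>2 ^ 2"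
      unfolding mse varf c5[symmetric] Ef2 EEU2 EVU by (simp add: power2_diff field_simps)
  qed
qed

end
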